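(* The two-dimensional subalgebras of ${\rm A}_2$ are exactly $\langle e_1,e_2\rangle$ and $\langle e_2,e_3\rangle$; up to automorphisms of ${\rm A}_2$ every two-dimensional subalgebra is equivalent to $\langle e_1,e_2\rangle$ or $\langle e_2,e_3\rangle$.
   Context: ${\rm A}_2$ is the complex algebra with basis $e_1,e_2,e_3$, unit $e_1$ ($e_1e_i=e_ie_1=e_i$), and $e_3e_3=e_2$; all other products of basis elements are zero. A subalgebra is a linear subspace closed under multiplication (it need not contain $e_1$). Equivalence up to automorphisms means one is mapped onto the other by an algebra automorphism. $\langle S\rangle$ denotes linear span. *)

theory Defs
  imports "HOL-Analysis.Analysis"
begin

text \<open>The algebra A2 is modelled on the complex vector space complex^3, coordinates
  taken w.r.t. the basis e1, e2, e3 (= axis 1 1, axis 2 1, axis 3 1).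
  Linear-algebra notions are the complex ones (vec.subspace, vec.span, vec.dim, complex-linear maps).\<close>

definition A2_e1 :: "complex ^ 3" where "A2_e1 = axis 1 1"
definition A2_e2 :: "complex ^ 3" where "A2_e2 = axis 2 1"
definition A2_e3 :: "complex ^ 3" where "A2_e3 = axis 3 1"

text \<open>Bilinear extension of e1 ei = ei e1 = ei, e3 e3 = e2, other basis products 0.\<close>
definition A2_mult :: "complex ^ 3 \<Rightarrow> complex ^ 3 \<Rightarrow> complex ^ 3" where
  "A2_mult x y = vector [x$1 * y$1,
                         x$1 * y$2 + x$2 * y$1 + x$3 * y$3,
                         x$1 * y$3 + x$3 * y$1]"

definition A2_subalgebra :: "(complex ^ 3) set \<Rightarrow> bool" where
  "A2_subalgebra S \<longleftrightarrow> vec.subspace S \<and> (\<forall>x\<in>S. \<forall>y\<in>S. A2_mult x y \<in> S)"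

definition A2_automorphism :: "(complex ^ 3 \<Rightarrow> complex ^ 3) \<Rightarrow> bool" where
  "A2_automorphism f \<longleftrightarrow> Vector_Spaces.linear ((*s)) ((*s)) f \<and> bij f \<and>
     (\<forall>x y. f (A2_mult x y) = A2_mult (f x) (f y))"

end

theory Submission
  imports Defs
begin

lemma mult_comp:
  "A2_mult x y $ 1 = x$1 * y$1"
  "A2_mult x y $ 2 = x$1 * y$2 + x$2 * y$1 + x$3 * y$3"
  "A2_mult x y $ 3 = x$1 * y$3 + x$3 * y$1"
  by (simp_all add: A2_mult_def)

lemma ecomp:
  "A2_e1 $ 1 = 1" "A2_e1 $ 2 = 0" "A2_e1 $ 3 = 0"
  "A2_e2 $ 1 = 0" "A2_e2 $ 2 = 1" "A2_e2 $ 3 = 0"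
  "A2_e3 $ 1 = 0" "A2_e3 $ 2 = 0" "A2_e3 $ 3 = 1"
  by (simp_all add: A2_e1_def A2_e2_def A2_e3_def axis_def)

lemma span_gen:
  fixes a b :: "complex^3" and k :: 3
  assumes "a $ k = 0" "b $ k = 0"
    and "\<And>x. x $ k = 0 \<Longrightarrow> x = (x $ i) *s a + (x $ j) *s b"
  shows "vec.span {a, b} = {x. x $ k = 0}"
proof
  show "vec.span {a, b} \<subseteq> {x. x $ k = 0}"
    by (rule vec.span_minimal) (auto simp: assms vec.subspace_def)
  show "{x. x $ k = 0} \<subseteq> vec.span {a, b}"
  proof
    fix x :: "complex^3" assume "x \<in> {x. x $ k = 0}"
    then have "x = (x $ i) *s a + (x $ j) *s b" using assms(3) by auto
    moreover have "(x $ i) *s a + (x $ j) *s b \<in> vec.span {a, b}"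
      by (intro vec.span_add vec.span_scale vec.span_base) auto
    ultimately show "x \<in> vec.span {a, b}" by simp
  qed
qed

lemma V12: "vec.span {A2_e1, A2_e2} = {x. x $ 3 = 0}"
  by (rule span_gen[where i=1 and j=2]) (auto simp: ecomp vec_eq_iff forall_3)

lemma V23: "vec.span {A2_e2, A2_e3} = {x. x $ 1 = 0}"
  by (rule span_gen[where i=2 and j=3]) (auto simp: ecomp vec_eq_iff forall_3)

lemma dimV: "vec.dim {x::complex^3. x $ k = 0} = 2"
proof -
  have "{x::complex^3. x $ k = 0} = {x. \<forall>i. i \<notin> UNIV - {k} \<longrightarrow> x$i = 0}" by auto
  moreover have "card (UNIV - {k}) = 2" by (simp add: card_Diff_singleton)
  ultimately show ?thesis using dim_substandard_cart[of "UNIV - {k}", where 'a=complex] by simp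
qed

lemma subspaceV: "vec.subspace {x::complex^3. x $ k = 0}"
  by (auto simp: vec.subspace_def)

lemma subalgV12: "A2_subalgebra {x. x $ 3 = 0}"
  by (auto simp: A2_subalgebra_def subspaceV mult_comp)

lemma subalgV23: "A2_subalgebra {x. x $ 1 = 0}"
  by (auto simp: A2_subalgebra_def subspaceV mult_comp)

lemma eqV:
  assumes "vec.subspace S" "vec.dim S = 2" "S \<subseteq> {x::complex^3. x $ k = 0}"
  shows "S = {x. x $ k = 0}"
  using vec.subspace_dim_equal[OF assms(1) subspaceV assms(3)] assms(2) dimV by simp

lemma full:
  assumes S: "A2_subalgebra S" and u: "u \<in> S" "u $ 1 \<noteq> 0" and x: "x \<in> S" "x $ 3 \<noteq> 0"
  shows "S = UNIV"
proof -
  have sub: "vec.subspace S" and cl: "\<And>a b. a \<in> S \<Longrightarrow> b \<in> S \<Longrightarrow> A2_mult a b \<in> S"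
    using S by (auto simp: A2_subalgebra_def)
  have sc: "c *s a \<in> S" if "a \<in> S" for a c using vec.subspace_scale[OF sub that] .
  have ad: "a + b \<in> S" if "a \<in> S" "b \<in> S" for a b using vec.subspace_add[OF sub that] .
  define w where "w = inverse (u $ 1) *s u"
  have w: "w \<in> S" using sc u unfolding w_def by simp
  have w1: "w $ 1 = 1" using u unfolding w_def by simp
  define ww where "ww = A2_mult w w"
  define www where "www = A2_mult ww w"
  have "ww \<in> S" "www \<in> S" using cl w unfolding ww_def www_def by auto
  then have "3 *s w + (-3) *s ww + 1 *s www \<in> S" using sc ad w by meson
  moreover have "3 *s w + (-3) *s ww + 1 *s www = A2_e1"
    by (simp add: vec_eq_iff forall_3 ecomp ww_def www_def mult_comp w1 algebra_simps)
  ultimately have e1: "A2_e1 \<in> S" by simp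
  define y where "y = x + (- (x$1)) *s A2_e1"
  have y: "y \<in> S" unfolding y_def using ad sc x e1 by blast
  have y1: "y $ 1 = 0" "y $ 3 = x $ 3" "y $ 2 = x $ 2" by (simp_all add: y_def ecomp)
  have "inverse ((x$3)^2) *s A2_mult y y \<in> S" using sc cl y by blast
  moreover have "inverse ((x$3)^2) *s A2_mult y y = A2_e2"
    using x(2) by (simp add: vec_eq_iff forall_3 ecomp mult_comp y1 power2_eq_square field_simps)
  ultimately have e2: "A2_e2 \<in> S" by simp
  have "inverse (x$3) *s (y + (- (x$2)) *s A2_e2) \<in> S" using sc ad e2 y by blast
  moreover have "inverse (x$3) *s (y + (- (x$2)) *s A2_e2) = A2_e3"
    using x(2) by (simp add: vec_eq_iff forall_3 ecomp y1 field_simps)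
  ultimately have e3: "A2_e3 \<in> S" by simp
  show ?thesis
  proof (rule set_eqI, rule iffI)
    fix z :: "complex^3"
    have "(z$1) *s A2_e1 + (z$2) *s A2_e2 + (z$3) *s A2_e3 \<in> S" using sc ad e1 e2 e3 by meson
    moreover have "(z$1) *s A2_e1 + (z$2) *s A2_e2 + (z$3) *s A2_e3 = z"
      by (simp add: vec_eq_iff forall_3 ecomp)
    ultimately show "z \<in> S" by simp
  qed simp
qed

lemma part1: "(A2_subalgebra S \<and> vec.dim S = 2) \<longleftrightarrow>
              (S = vec.span {A2_e1, A2_e2} \<or> S = vec.span {A2_e2, A2_e3})"
proof
  assume A: "A2_subalgebra S \<and> vec.dim S = 2"
  then have sub: "vec.subspace S" by (simp add: A2_subalgebra_def)
  show "S = vec.span {A2_e1, A2_e2} \<or> S = vec.span {A2_e2, A2_e3}"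
  proof (cases "\<forall>x\<in>S. x $ 1 = 0")
    case True
    then have "S = {x. x $ 1 = 0}" using eqV[OF sub] A by auto
    then show ?thesis by (simp add: V23)
  next
    case False
    then obtain u where u: "u \<in> S" "u $ 1 \<noteq> 0" by auto
    show ?thesis
    proof (cases "\<forall>x\<in>S. x $ 3 = 0")
      case True
      then have "S = {x. x $ 3 = 0}" using eqV[OF sub] A by auto
      then show ?thesis by (simp add: V12)
    next
      case False
      then obtain x where "x \<in> S" "x $ 3 \<noteq> 0" by auto
      then have "S = UNIV" using full A u by blast
      then have "vec.dim S = 3" using vec_dim_card[where 'a=complex and 'n=3] by simp
      then show ?thesis using A by simp
    qed
  qed
next
  assume "S = vec.span {A2_e1, A2_e2} \<or> S = vec.span {A2_e2, A2_e3}"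
  then show "A2_subalgebra S \<and> vec.dim S = 2"
    using V12 V23 subalgV12 subalgV23 dimV by auto
qed

lemma auto_id: "A2_automorphism id"
  by (simp add: A2_automorphism_def vec.linear_id)

theorem mainTheorem7:
  shows "(\<forall>S. (A2_subalgebra S \<and> vec.dim S = 2) \<longleftrightarrow>
              (S = vec.span {A2_e1, A2_e2} \<or> S = vec.span {A2_e2, A2_e3}))
       \<and> (\<forall>S. A2_subalgebra S \<and> vec.dim S = 2 \<longrightarrow>
              (\<exists>f. A2_automorphism f \<and>
                   (f ` S = vec.span {A2_e1, A2_e2} \<or> f ` S = vec.span {A2_e2, A2_e3})))"
proof (intro conjI allI impI)
  fix S show "(A2_subalgebra S \<and> vec.dim S = 2) \<longleftrightarrow>
              (S = vec.span {A2_e1, A2_e2} \<or> S = vec.span {A2_e2, A2_e3})" by (rule part1)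
next
  fix S :: "(complex^3) set" assume "A2_subalgebra S \<and> vec.dim S = 2"
  then have "S = vec.span {A2_e1, A2_e2} \<or> S = vec.span {A2_e2, A2_e3}" using part1 by blast
  then show "\<exists>f. A2_automorphism f \<and>
                   (f ` S = vec.span {A2_e1, A2_e2} \<or> f ` S = vec.span {A2_e2, A2_e3})"
    using auto_id by (intro exI[of _ id]) auto
qed

end
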